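(* Let $m=2k+1$ with $k$ a nonnegative integer. For $h\in(0,+\infty)$ let $u=u(h)$, $J_{i,j}=J_{i,j}(h)$ and $I_{i,j}=I_{i,j}(h)$ be as in the context. Then: (i) For all integers $i,l,s\ge 0$: $J_{i,2s}=-I_{i,2s}$, $J_{2l,2s+1}=I_{2l,2s+1}$, $J_{2l+1,2s+1}=-I_{2l+1,2s+1}$. (ii) For every integer $l\ge 1$ there are constants $\tau^{i}_{l,d}$, $\mu^{i}_{l,d}$ such that for $0\le d\le l$ $$J_{2l-2d,2d}=\tau_{l,d}^{0}h^{l}J_{0,0}+\sum_{i=1}^{d}\tau_{l,d}^{i}h^{i-1}u^{2l+2d(m-1)+1-2m(i-1)}+\sum_{i=1}^{l-d}\tau_{l,d}^{i+d}h^{l-i}u^{2m+1+2(i-1)},$$ and for $0\le d\le l-1$ $$J_{2l-2d-1,2d+1}=\mu_{l,d}^{0}h^{l-1}J_{1,1}+\sum_{i=1}^{d}\mu_{l,d}^{i}h^{i-1}u^{2l+2d(m-1)+m-2m(i-1)}+\sum_{i=2}^{l-d}\mu_{l,d}^{i+d}h^{l-i}u^{3m+2+2(i-2)}.$$ (iii) For every integer $l\ge 0$ there are constants $\chi_{l,d}$ such that for $0\le d\le l$: $J_{2l+1-2d,2d}=0$ and $J_{2l-2d,2d+1}=\chi_{l,d}h^{l}J_{0,1}$.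
   Context: For $h>0$ let $u=u(h)>0$ be the unique positive number with $u^2+u^{2m}=h$; the circle $x^2+y^2=h$ meets the curve $y=x^m$ at $A=(-u,(-u)^m)$ and $B=(u,u^m)$. $L_h^{+}$ is the arc of this circle in $\{y\ge x^m\}$ traversed clockwise from $A$ to $B$, and $L_h^-$ the arc in $\{y\le x^m\}$ traversed clockwise from $B$ to $A$. For nonnegative integers $i,j$, $J_{i,j}(h)=\int_{L_h^+}x^iy^jdx$ and $I_{i,j}(h)=\int_{L_h^-}x^iy^jdx$. The constants $\tau,\mu,\chi$ depend only on the indices (and $m$), not on $h$. *)

theory Defs
  imports "HOL-Analysis.Analysis"
begin

definition uh :: "nat \<Rightarrow> real \<Rightarrow> real" where
  "uh m h = (THE u. u > 0 \<and> u ^ 2 + u ^ (2 * m) = h)"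

text \<open>Polar angles of B = (u, u^m) and A = (-u, (-u)^m) on the circle x^2+y^2=h.\<close>
definition thetaB :: "nat \<Rightarrow> real \<Rightarrow> real" where
  "thetaB m h = arctan (uh m h ^ m / uh m h)"

definition thetaA :: "nat \<Rightarrow> real \<Rightarrow> real" where
  "thetaA m h = pi + arctan ((- uh m h) ^ m / (- uh m h))"

text \<open>L_h^+ : arc through the top point (0, sqrt h), clockwise from A to B
  (angle decreasing from thetaA to thetaB), parametrised on [0,1].\<close>
definition Lplus :: "nat \<Rightarrow> real \<Rightarrow> real \<Rightarrow> real \<times> real" where
  "Lplus m h t = (let \<phi> = thetaA m h + t * (thetaB m h - thetaA m h)
                 in (sqrt h * cos \<phi>, sqrt h * sin \<phi>))"

text \<open>L_h^- : arc through the bottom point (0, -sqrt h), clockwise from B to A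
  (angle decreasing from thetaB to thetaA - 2 pi), parametrised on [0,1].\<close>
definition Lminus :: "nat \<Rightarrow> real \<Rightarrow> real \<Rightarrow> real \<times> real" where
  "Lminus m h t = (let \<phi> = thetaB m h + t * ((thetaA m h - 2 * pi) - thetaB m h)
                  in (sqrt h * cos \<phi>, sqrt h * sin \<phi>))"

definition line_integral_dx :: "(real \<times> real \<Rightarrow> real) \<Rightarrow> (real \<Rightarrow> real \<times> real) \<Rightarrow> real" where
  "line_integral_dx f g =
     integral {0..1} (\<lambda>t. f (g t) * vector_derivative (\<lambda>s. fst (g s)) (at t))"

definition Jint :: "nat \<Rightarrow> nat \<Rightarrow> nat \<Rightarrow> real \<Rightarrow> real" where
  "Jint m i j h = line_integral_dx (\<lambda>(x, y). x ^ i * y ^ j) (Lplus m h)"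

definition Iint :: "nat \<Rightarrow> nat \<Rightarrow> nat \<Rightarrow> real \<Rightarrow> real" where
  "Iint m i j h = line_integral_dx (\<lambda>(x, y). x ^ i * y ^ j) (Lminus m h)"

end

theory Submission
  imports Defs
begin


lemma uh_props:
  fixes m :: nat and h :: real
  assumes m: "m \<ge> 1" and h: "h > 0"
  shows "uh m h > 0 \<and> (uh m h)^2 + (uh m h)^(2*m) = h"
proof -
  let ?f = "\<lambda>u::real. u^2 + u^(2*m)"
  have ex: "\<exists>u. 0 \<le> u \<and> u \<le> 1 + h \<and> ?f u = h"
  proof (rule IVT')
    show "?f 0 \<le> h" using m h by (simp add: power_0_left)
    have "h \<le> (1+h)^2" using h by (simp add: power2_eq_square algebra_simps)
    moreover have "0 \<le> (1+h)^(2*m)" using h by simp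
    ultimately show "h \<le> ?f (1+h)" by linarith
    show "0 \<le> 1 + h" using h by simp
    show "continuous_on {0..1+h} ?f" by (intro continuous_intros)
  qed
  then obtain u where u: "0 \<le> u" "?f u = h" by blast
  have upos: "u > 0" using u h m by (cases "u = 0") (auto simp: power_0_left)
  have uniq: "v = u" if "v > 0" "?f v = h" for v
  proof (rule ccontr)
    assume "v \<noteq> u"
    then consider "v < u" | "u < v" by linarith
    then show False
    proof cases
      case 1
      have "v^2 < u^2" using 1 that by (simp add: power_strict_mono)
      moreover have "v^(2*m) \<le> u^(2*m)" using 1 that by (simp add: power_mono)
      ultimately show False using that u by linarith
    next
      case 2
      have "u^2 < v^2" using 2 upos by (simp add: power_strict_mono)
      moreover have "u^(2*m) \<le> v^(2*m)" using 2 upos by (simp add: power_mono)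
      ultimately show False using that u by linarith
    qed
  qed
  have "uh m h = u" unfolding uh_def
  proof (rule the_equality)
    show "0 < u \<and> u^2 + u^(2*m) = h" using upos u by simp
    show "\<And>v. 0 < v \<and> v^2 + v^(2*m) = h \<Longrightarrow> v = u" using uniq by blast
  qed
  then show ?thesis using upos u by simp
qed


lemma ftc_path:
  fixes Q q p p' :: "real \<Rightarrow> real"
  assumes dQ: "\<And>t. t \<in> {0..1} \<Longrightarrow> (Q has_real_derivative q (p t)) (at (p t))"
      and dp: "\<And>t. (p has_real_derivative p' t) (at t)"
  shows "integral {0..1} (\<lambda>t. q (p t) * p' t) = Q (p 1) - Q (p 0)"
proof -
  have "((\<lambda>t. q (p t) * p' t) has_integral (Q \<circ> p) 1 - (Q \<circ> p) 0) {0..1}"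
  proof (rule fundamental_theorem_of_calculus)
    fix t :: real assume t: "t \<in> {0..1}"
    have "((\<lambda>x. Q (p x)) has_real_derivative q (p t) * p' t) (at t)"
      by (rule DERIV_chain2[OF dQ[OF t] dp])
    then show "((Q \<circ> p) has_vector_derivative q (p t) * p' t) (at t within {0..1})"
      by (simp add: has_real_derivative_iff_has_vector_derivative[symmetric] o_def has_field_derivative_at_within)
  qed simp
  then show ?thesis by (simp add: integral_unique)
qed

definition Qe :: "nat \<Rightarrow> nat \<Rightarrow> real \<Rightarrow> real \<Rightarrow> real" where
  "Qe i b h x = (\<Sum>k\<le>b. real (b choose k) * (-1)^k * h^(b-k) * (x^(i+2*k+1) / real (i+2*k+1)))"

lemma Qe_deriv: "(Qe i b h has_real_derivative x^i * (h - x^2)^b) (at x)"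
proof -
  have "(Qe i b h has_real_derivative (\<Sum>k\<le>b. real (b choose k) * (-1)^k * h^(b-k) * x^(i+2*k))) (at x)"
    unfolding Qe_def[abs_def]
  proof (rule DERIV_sum)
    fix k
    have d: "((\<lambda>x. x^(i+2*k+1) / real (i+2*k+1)) has_real_derivative x^(i+2*k)) (at x)"
      using DERIV_cdivide[OF DERIV_pow[of "i+2*k+1" x], of "real (i+2*k+1)"] by simp
    show "((\<lambda>x. real (b choose k) * (-1)^k * h^(b-k) * (x^(i+2*k+1) / real (i+2*k+1))) has_real_derivative
       real (b choose k) * (-1)^k * h^(b-k) * x^(i+2*k)) (at x)"
      using DERIV_cmult[OF d, of "real (b choose k) * (-1)^k * h^(b-k)"] by simp
  qed
  moreover have "(\<Sum>k\<le>b. real (b choose k) * (-1)^k * h^(b-k) * x^(i+2*k)) = x^i * (h - x^2)^b"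
  proof -
    have "(h - x^2)^b = (uminus (x^2) + h)^b" by simp
    also have "\<dots> = (\<Sum>k\<le>b. real (b choose k) * (uminus (x^2))^k * h^(b-k))" by (rule binomial_ring)
    finally show ?thesis
      by (simp add: sum_distrib_left power_add power_mult power_minus' power2_eq_square power_mult_distrib algebra_simps)
  qed
  ultimately show ?thesis by simp
qed

lemma Qe_neg: "Qe i b h (-x) = (-1)^(i+1) * Qe i b h x"
  unfolding Qe_def sum_distrib_left
  by (rule sum.cong) (simp_all add: power_minus' power_add power_mult)

definition fab :: "nat \<Rightarrow> nat \<Rightarrow> real \<Rightarrow> real" where
  "fab a b x = cos x ^ (2*a) * sin x ^ (2*b+2)"

lemma fab_pi: "fab a b (x + pi) = fab a b x"
  unfolding fab_def by (simp add: power_mult)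

lemma period_const:
  "\<exists>G c. (\<forall>x\<in>{-10<..<10}. (G has_real_derivative fab a b x) (at x)) \<and>
          (\<forall>t\<in>{0..pi/2}. G (t + pi) - G t = c)"
proof -
  define G where "G x = integral {-10..x} (fab a b)" for x
  have cont: "continuous_on {-10..10} (fab a b)" unfolding fab_def by (intro continuous_intros)
  have dG: "(G has_real_derivative fab a b x) (at x)" if "x \<in> {-10<..<10}" for x
  proof -
    have "(G has_real_derivative fab a b x) (at x within {-10..10})"
      unfolding G_def[abs_def] by (rule integral_has_real_derivative[OF cont]) (use that in auto)
    moreover have "at x within {-10..10} = at x"
      by (rule at_within_interior) (use that in simp)
    ultimately show ?thesis by simp
  qed
  have "\<exists>c. \<forall>t\<in>{0..pi/2}. G (t + pi) - G t = c"
  proof (rule has_field_derivative_zero_constant)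
    show "convex {0..pi/2}" by simp
    fix t assume t: "t \<in> {0..pi/2}"
    have "t + pi \<in> {-10<..<10}" "t \<in> {-10<..<10}" using t pi_less_4 pi_gt3 by auto
    then have "((\<lambda>t. G (t + pi) - G t) has_real_derivative fab a b (t + pi) * 1 - fab a b t) (at t)"
      by (intro derivative_intros DERIV_chain2[OF dG] dG) (auto intro!: derivative_eq_intros)
    then show "((\<lambda>t. G (t + pi) - G t) has_real_derivative 0) (at t within {0..pi/2})"
      by (simp add: fab_pi has_field_derivative_at_within)
  qed
  then show ?thesis using dG by blast
qed

locale cfg_h =
  fixes m k :: nat and h :: real
  assumes hm: "m = 2*k+1" and hpos: "h > 0"
begin

definition u where "u = uh m h"
definition r where "r = sqrt h"
definition th where "th = thetaB m h"

lemma m1: "m \<ge> 1" using hm by simp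
lemma u_pos: "u > 0" using uh_props[OF m1 hpos] unfolding u_def by simp
lemma u_eq: "u^2 + u^(2*m) = h" using uh_props[OF m1 hpos] unfolding u_def by simp
lemma r_pos: "r > 0" unfolding r_def using hpos by simp
lemma r2: "r^2 = h" unfolding r_def using hpos by simp

lemma rsc: "(r * sin z)^2 = h - (r * cos z)^2" "(r * cos z)^2 = h - (r * sin z)^2"
proof -
  have "(r * sin z)^2 = r^2 * (1 - (cos z)^2)" by (simp add: power_mult_distrib sin_squared_eq)
  also have "\<dots> = h - (r * cos z)^2" using r2 by (simp add: power_mult_distrib right_diff_distrib)
  finally show "(r * sin z)^2 = h - (r * cos z)^2" .
  have "(r * cos z)^2 = r^2 * (1 - (sin z)^2)" by (simp add: power_mult_distrib cos_squared_eq)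
  also have "\<dots> = h - (r * sin z)^2" using r2 by (simp add: power_mult_distrib right_diff_distrib)
  finally show "(r * cos z)^2 = h - (r * sin z)^2" .
qed

lemma thA: "thetaA m h = pi + th"
proof -
  have "odd m" using hm by simp
  then have "(- u)^m = - (u^m)" by (simp add: power_minus_odd)
  then have "(- u)^m / (- u) = u^m / u" by simp
  then show ?thesis unfolding thetaA_def th_def thetaB_def u_def[symmetric] by simp
qed

lemma th_range: "0 < th" "th < pi/2"
proof -
  have "u^m / u > 0" using u_pos by simp
  then show "0 < th" unfolding th_def thetaB_def u_def[symmetric] by (simp add: arctan_less_zero_iff)
  show "th < pi/2" unfolding th_def thetaB_def using arctan_ubound by blast
qed

lemma r_cos_sin: "r * cos th = u" "r * sin th = u^m"
proof -
  define t where "t = u^m / u"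
  have up: "u > 0" by (rule u_pos)
  have "h = u^2 * (1 + t^2)"
  proof -
    have "u^2 * (1 + t^2) = u^2 + (u^m)^2" unfolding t_def using up
      by (simp add: power_divide field_simps power2_eq_square)
    also have "\<dots> = h" using u_eq by (simp add: power_mult[symmetric] mult.commute)
    finally show ?thesis by simp
  qed
  then have "sqrt h = sqrt (u^2 * (1 + t^2))" by (rule arg_cong)
  also have "\<dots> = sqrt (u^2) * sqrt (1 + t^2)" by (rule real_sqrt_mult)
  finally have "sqrt h = sqrt (u^2) * sqrt (1 + t^2)" .
  then have "r = u * sqrt (1 + t^2)" unfolding r_def using up by simp
  moreover have "th = arctan t" unfolding th_def thetaB_def t_def u_def by simp
  moreover have "sqrt (1 + t^2) > 0" by (simp add: add_pos_nonneg)
  ultimately show "r * cos th = u" "r * sin th = u^m"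
    using up by (simp_all add: cos_arctan sin_arctan t_def)
qed

lemma Lplus_eq: "Lplus m h = (\<lambda>t. (r * cos (th + pi - t*pi), r * sin (th + pi - t*pi)))"
  unfolding Lplus_def thA th_def[symmetric] r_def[symmetric] Let_def
  by (rule ext) (simp add: algebra_simps)

lemma Lminus_eq: "Lminus m h = (\<lambda>t. (r * cos (th - t*pi), r * sin (th - t*pi)))"
  unfolding Lminus_def thA th_def[symmetric] r_def[symmetric] Let_def
  by (rule ext) (simp add: algebra_simps)

lemma vd: "vector_derivative (\<lambda>s. r * cos (c - s*pi)) (at t) = r * sin (c - t*pi) * pi"
proof -
  have "((\<lambda>s. r * cos (c - s*pi)) has_real_derivative r * sin (c - t*pi) * pi) (at t)"
    by (auto intro!: derivative_eq_intros)
  then show ?thesis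
    by (intro vector_derivative_at) (simp add: has_real_derivative_iff_has_vector_derivative)
qed

lemma J_formula: "Jint m i j h = integral {0..1} (\<lambda>t. (r * cos (th + pi - t*pi))^i * (r * sin (th + pi - t*pi))^j * (r * sin (th + pi - t*pi) * pi))"
  unfolding Jint_def line_integral_dx_def Lplus_eq using vd[of "th + pi"] by simp

lemma I_formula: "Iint m i j h = integral {0..1} (\<lambda>t. (r * cos (th - t*pi))^i * (r * sin (th - t*pi))^j * (r * sin (th - t*pi) * pi))"
  unfolding Iint_def line_integral_dx_def Lminus_eq using vd[of "th"] by simp

lemma JI: "Jint m i j h = (-1)^(i+j+1) * Iint m i j h"
proof -
  have "Jint m i j h = integral {0..1} (\<lambda>t. (-1)^(i+j+1) * ((r * cos (th - t*pi))^i * (r * sin (th - t*pi))^j * (r * sin (th - t*pi) * pi)))"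
    unfolding J_formula
  proof (rule integral_cong)
    fix t
    have c: "cos (th + pi - t*pi) = - cos (th - t*pi)" and s: "sin (th + pi - t*pi) = - sin (th - t*pi)"
      using cos_periodic_pi[of "th - t*pi"] sin_periodic_pi[of "th - t*pi"]
      by (simp_all add: algebra_simps)
    show "(r * cos (th + pi - t*pi))^i * (r * sin (th + pi - t*pi))^j * (r * sin (th + pi - t*pi) * pi) =
      (-1)^(i+j+1) * ((r * cos (th - t*pi))^i * (r * sin (th - t*pi))^j * (r * sin (th - t*pi) * pi))"
      unfolding c s by (simp add: power_minus' power_add algebra_simps)
  qed
  also have "\<dots> = (-1)^(i+j+1) * Iint m i j h"
    unfolding I_formula using integral_cmul[of "(-1)^(i+j+1)"] by simp
  finally show ?thesis .
qed

lemma J_even: "Jint m i (2*b) h = Qe i b h u - Qe i b h (-u)"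
proof -
  have "Jint m i (2*b) h = integral {0..1} (\<lambda>t. (\<lambda>x. x^i * (h - x^2)^b) (r * cos (th + pi - t*pi)) * (r * sin (th + pi - t*pi) * pi))"
    unfolding J_formula
  proof (rule integral_cong)
    fix t
    have "(r * sin (th + pi - t*pi))^2 = h - (r * cos (th + pi - t*pi))^2"
      by (rule rsc)
    then show "(r * cos (th + pi - t*pi))^i * (r * sin (th + pi - t*pi))^(2*b) * (r * sin (th + pi - t*pi) * pi) =
      (\<lambda>x. x^i * (h - x^2)^b) (r * cos (th + pi - t*pi)) * (r * sin (th + pi - t*pi) * pi)"
      by (simp add: power_mult)
  qed
  also have "\<dots> = Qe i b h ((\<lambda>t. r * cos (th + pi - t*pi)) 1) - Qe i b h ((\<lambda>t. r * cos (th + pi - t*pi)) 0)"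
  proof (rule ftc_path)
    show "(Qe i b h has_real_derivative (\<lambda>x. x^i * (h - x^2)^b) (r * cos (th + pi - t*pi))) (at (r * cos (th + pi - t*pi)))" for t
      by (rule Qe_deriv)
    show "((\<lambda>t. r * cos (th + pi - t*pi)) has_real_derivative r * sin (th + pi - t*pi) * pi) (at t)" for t
      by (auto intro!: derivative_eq_intros)
  qed
  also have "\<dots> = Qe i b h u - Qe i b h (-u)"
    using r_cos_sin(1) cos_periodic_pi[of th] by (simp add: add.commute)
  finally show ?thesis .
qed

lemma J_evenodd:
  assumes dG: "\<forall>x\<in>{-10<..<10}. (G has_real_derivative fab a b x) (at x)"
  shows "Jint m (2*a) (2*b+1) h = r^(2*a+2*b+2) * (G (th + pi) - G th)"
proof -
  have "Jint m (2*a) (2*b+1) h = integral {0..1} (\<lambda>t. (- (r^(2*a+2*b+2))) * (fab a b (th + pi - t*pi) * (- pi)))"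
    unfolding J_formula
  proof (rule integral_cong)
    fix t
    show "(r * cos (th + pi - t*pi))^(2*a) * (r * sin (th + pi - t*pi))^(2*b+1) * (r * sin (th + pi - t*pi) * pi) =
      (- (r^(2*a+2*b+2))) * (fab a b (th + pi - t*pi) * (- pi))"
      unfolding fab_def by (simp add: power_mult_distrib power_add algebra_simps)
  qed
  also have "\<dots> = (- (r^(2*a+2*b+2))) * integral {0..1} (\<lambda>t. fab a b (th + pi - t*pi) * (- pi))"
    using integral_cmul[where c="- (r^(2*a+2*b+2))" and f="\<lambda>t. fab a b (th + pi - t*pi) * (- pi)"] by simp
  also have "integral {0..1} (\<lambda>t. fab a b (th + pi - t*pi) * (- pi)) = G ((\<lambda>t. th + pi - t*pi) 1) - G ((\<lambda>t. th + pi - t*pi) 0)"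
  proof (rule ftc_path[where q="fab a b" and p="\<lambda>t. th + pi - t*pi"])
    fix t :: real assume t: "t \<in> {0..1}"
    have "0 \<le> t * pi" "t * pi \<le> pi" using t pi_gt_zero by (auto simp: mult_le_cancel_right1)
    then have "-10 < th + pi - t*pi" "th + pi - t*pi < 10" using th_range pi_less_4 by linarith+
    then have "th + pi - t*pi \<in> {-10<..<10}" by simp
    then show "(G has_real_derivative fab a b (th + pi - t*pi)) (at (th + pi - t*pi))" using dG by blast
  next
    show "((\<lambda>t. th + pi - t*pi) has_real_derivative - pi) (at t)" for t
      by (auto intro!: derivative_eq_intros)
  qed
  finally show ?thesis by (simp add: algebra_simps)
qed

lemma J01: "Jint m 0 1 h = h * pi / 2"
proof -
  define G :: "real \<Rightarrow> real" where "G x = (x - sin x * cos x) / 2" for x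
  have "Jint m (2*0) (2*0+1) h = r^(2*0+2*0+2) * (G (th + pi) - G th)"
  proof (rule J_evenodd, intro ballI)
    fix x :: real
    show "(G has_real_derivative fab 0 0 x) (at x)"
      unfolding G_def[abs_def] fab_def
      by (auto intro!: derivative_eq_intros simp: power2_eq_square cos_squared_eq[unfolded power2_eq_square] field_simps)
  qed
  also have "G (th + pi) - G th = pi / 2" unfolding G_def by (simp add: field_simps)
  finally have "Jint m 0 1 h = r^2 * (pi / 2)" by (simp add: power2_eq_square)
  then show ?thesis using r2 by simp
qed

lemma oo_aux: "C^2 = h - S^2 \<Longrightarrow> C^(2*a+1) * S^(2*b+1) * (S*p) = - (S^(2*b+2) * (h - S^2)^a * (- C * p))"
  for C S p :: real
proof -
  assume e: "C^2 = h - S^2"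
  have "C^(2*a+1) * S^(2*b+1) * (S*p) = S^(2*b+2) * C^(2*a) * (C * p)"
    by (simp add: power_add power2_eq_square algebra_simps)
  also have "C^(2*a) = (C^2)^a" by (simp add: power_mult)
  finally have "C^(2*a+1) * S^(2*b+1) * (S*p) = S^(2*b+2) * (C^2)^a * (C * p)" .
  then show ?thesis using e by simp
qed

lemma J_oddodd: "Jint m (2*a+1) (2*b+1) h = - (Qe (2*b+2) a h (u^m) - Qe (2*b+2) a h (-(u^m)))"
proof -
  have "Jint m (2*a+1) (2*b+1) h = integral {0..1} (\<lambda>t. - ((\<lambda>y. y^(2*b+2) * (h - y^2)^a) (r * sin (th + pi - t*pi)) * (- r * cos (th + pi - t*pi) * pi)))"
    unfolding J_formula
  proof (rule integral_cong)
    fix t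
    have "(r * cos (th + pi - t*pi))^2 = h - (r * sin (th + pi - t*pi))^2"
      by (rule rsc)
    then show "(r * cos (th + pi - t*pi))^(2*a+1) * (r * sin (th + pi - t*pi))^(2*b+1) * (r * sin (th + pi - t*pi) * pi) =
      - ((\<lambda>y. y^(2*b+2) * (h - y^2)^a) (r * sin (th + pi - t*pi)) * (- r * cos (th + pi - t*pi) * pi))"
      using oo_aux[where C="r * cos (th + pi - t*pi)" and S="r * sin (th + pi - t*pi)" and p=pi and a=a and b=b] by simp
  qed
  also have "\<dots> = - (Qe (2*b+2) a h ((\<lambda>t. r * sin (th + pi - t*pi)) 1) - Qe (2*b+2) a h ((\<lambda>t. r * sin (th + pi - t*pi)) 0))"
  proof -
    have "integral {0..1} (\<lambda>t. (\<lambda>y. y^(2*b+2) * (h - y^2)^a) (r * sin (th + pi - t*pi)) * (- r * cos (th + pi - t*pi) * pi))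
      = Qe (2*b+2) a h ((\<lambda>t. r * sin (th + pi - t*pi)) 1) - Qe (2*b+2) a h ((\<lambda>t. r * sin (th + pi - t*pi)) 0)"
    proof (rule ftc_path)
      show "(Qe (2*b+2) a h has_real_derivative (\<lambda>y. y^(2*b+2) * (h - y^2)^a) (r * sin (th + pi - t*pi))) (at (r * sin (th + pi - t*pi)))" for t
        by (rule Qe_deriv)
      show "((\<lambda>t. r * sin (th + pi - t*pi)) has_real_derivative - r * cos (th + pi - t*pi) * pi) (at t)" for t
        by (auto intro!: derivative_eq_intros)
    qed
    then show ?thesis by (simp only: integral_neg)
  qed
  also have "\<dots> = - (Qe (2*b+2) a h (u^m) - Qe (2*b+2) a h (-(u^m)))"
    using r_cos_sin(2) sin_periodic_pi[of th] by (simp add: add.commute)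
  finally show ?thesis .
qed

end



definition inspan :: "((nat \<Rightarrow> real) \<Rightarrow> real \<Rightarrow> real) \<Rightarrow> (real \<Rightarrow> real) \<Rightarrow> bool" where
  "inspan E f \<longleftrightarrow> (\<exists>\<tau>. \<forall>h>0. f h = E \<tau> h)"

definition linE :: "((nat \<Rightarrow> real) \<Rightarrow> real \<Rightarrow> real) \<Rightarrow> bool" where
  "linE E \<longleftrightarrow> (\<forall>\<tau> \<tau>' c h. E (\<lambda>i. c * \<tau> i + \<tau>' i) h = c * E \<tau> h + E \<tau>' h)"

lemma linE_zero: "linE E \<Longrightarrow> E (\<lambda>i. 0) h = 0"
  unfolding linE_def
  apply (drule spec[where x="\<lambda>i. 0"], drule spec[where x="\<lambda>i. 0"], drule spec[where x="-1"], drule spec[where x=h])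
  by simp

lemma inspan_zero: "linE E \<Longrightarrow> inspan E (\<lambda>h. 0)"
  unfolding inspan_def using linE_zero by metis

lemma inspan_lin: "linE E \<Longrightarrow> inspan E f \<Longrightarrow> inspan E g \<Longrightarrow> inspan E (\<lambda>h. c * f h + g h)"
proof -
  assume l: "linE E" and "inspan E f" "inspan E g"
  then obtain \<tau> \<tau>' where t: "\<forall>h>0. f h = E \<tau> h" "\<forall>h>0. g h = E \<tau>' h" unfolding inspan_def by blast
  have "\<forall>h>0. c * f h + g h = E (\<lambda>i. c * \<tau> i + \<tau>' i) h"
    using t l unfolding linE_def by simp
  then show ?thesis unfolding inspan_def by blast
qed

lemma inspan_sum:
  assumes lE: "linE E" and fin: "finite A" and ins: "\<And>x. x \<in> A \<Longrightarrow> inspan E (f x)"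
  shows "inspan E (\<lambda>h. \<Sum>x\<in>A. c x * f x h)"
  using fin ins
proof (induction A rule: finite_induct)
  case empty
  then show ?case using inspan_zero[OF lE] by simp
next
  case (insert x F)
  have "inspan E (\<lambda>h. c x * f x h + (\<Sum>x\<in>F. c x * f x h))"
    using insert by (intro inspan_lin[OF lE]) auto
  then show ?case using insert by simp
qed

lemma inspan_cong: "(\<And>h. h > 0 \<Longrightarrow> f h = g h) \<Longrightarrow> inspan E g \<Longrightarrow> inspan E f"
  unfolding inspan_def by simp

lemma inspan_scale: "linE E \<Longrightarrow> inspan E f \<Longrightarrow> inspan E (\<lambda>h. c * f h)"
  using inspan_lin[of E f "\<lambda>h. 0" c] inspan_zero by simp

lemma sum_delta_mult: "finite A \<Longrightarrow> (\<Sum>x\<in>A. (if x = a then 1 else 0) * (f x::real)) = (if a \<in> A then f a else 0)"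
proof -
  assume "finite A"
  have "(\<Sum>x\<in>A. (if x = a then 1 else 0) * f x) = (\<Sum>x\<in>A. if x = a then f x else 0)" by (rule sum.cong) auto
  also have "\<dots> = (if a \<in> A then f a else 0)" using \<open>finite A\<close> by (rule sum.delta)
  finally show ?thesis .
qed

definition ES :: "nat \<Rightarrow> nat \<Rightarrow> nat \<Rightarrow> (nat \<Rightarrow> real) \<Rightarrow> real \<Rightarrow> real" where
  "ES m l d \<tau> h = \<tau> 0 * h ^ l * Jint m 0 0 h
          + (\<Sum>i=1..d. \<tau> i * h ^ (i-1) * uh m h ^ (2 * l + 2 * d * (m-1) + 1 - 2 * m * (i-1)))
          + (\<Sum>i=1..l-d. \<tau> (i+d) * h ^ (l-i) * uh m h ^ (2 * m + 1 + 2 * (i-1)))"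

definition EM :: "nat \<Rightarrow> nat \<Rightarrow> nat \<Rightarrow> (nat \<Rightarrow> real) \<Rightarrow> real \<Rightarrow> real" where
  "EM m l d \<mu> h = \<mu> 0 * h ^ (l-1) * Jint m 1 1 h
          + (\<Sum>i=1..d. \<mu> i * h ^ (i-1) * uh m h ^ (2 * l + 2 * d * (m-1) + m - 2 * m * (i-1)))
          + (\<Sum>i=2..l-d. \<mu> (i+d) * h ^ (l-i) * uh m h ^ (3 * m + 2 + 2 * (i-2)))"

lemma linE_ES: "linE (ES m l d)"
  unfolding linE_def ES_def by (simp add: sum.distrib sum_distrib_left algebra_simps)

lemma linE_EM: "linE (EM m l d)"
  unfolding linE_def EM_def by (simp add: sum.distrib sum_distrib_left algebra_simps)

lemma ES_0: "inspan (ES m l d) (\<lambda>h. h ^ l * Jint m 0 0 h)"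
proof -
  have "\<forall>h>0. h ^ l * Jint m 0 0 h = ES m l d (\<lambda>n. if n = 0 then 1 else 0) h"
    unfolding ES_def by simp
  then show ?thesis unfolding inspan_def by blast
qed

lemma ES_1: "i \<in> {1..d} \<Longrightarrow> inspan (ES m l d) (\<lambda>h. h ^ (i-1) * uh m h ^ (2 * l + 2 * d * (m-1) + 1 - 2 * m * (i-1)))"
proof -
  assume i: "i \<in> {1..d}"
  have "\<forall>h>0. h ^ (i-1) * uh m h ^ (2 * l + 2 * d * (m-1) + 1 - 2 * m * (i-1)) = ES m l d (\<lambda>n. if n = i then 1 else 0) h"
    unfolding ES_def using i by (simp add: mult.assoc sum_delta_mult)
  then show ?thesis unfolding inspan_def by blast
qed

lemma ES_2: "i \<in> {1..l-d} \<Longrightarrow> inspan (ES m l d) (\<lambda>h. h ^ (l-i) * uh m h ^ (2 * m + 1 + 2 * (i-1)))"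
proof -
  assume i: "i \<in> {1..l-d}"
  have "\<forall>h>0. h ^ (l-i) * uh m h ^ (2 * m + 1 + 2 * (i-1)) = ES m l d (\<lambda>n. if n = i + d then 1 else 0) h"
    unfolding ES_def using i by (simp add: mult.assoc sum_delta_mult)
  then show ?thesis unfolding inspan_def by blast
qed

lemma EM_0: "inspan (EM m l d) (\<lambda>h. h ^ (l-1) * Jint m 1 1 h)"
proof -
  have "\<forall>h>0. h ^ (l-1) * Jint m 1 1 h = EM m l d (\<lambda>n. if n = 0 then 1 else 0) h"
    unfolding EM_def by simp
  then show ?thesis unfolding inspan_def by blast
qed

lemma EM_1: "i \<in> {1..d} \<Longrightarrow> inspan (EM m l d) (\<lambda>h. h ^ (i-1) * uh m h ^ (2 * l + 2 * d * (m-1) + m - 2 * m * (i-1)))"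
proof -
  assume i: "i \<in> {1..d}"
  have "\<forall>h>0. h ^ (i-1) * uh m h ^ (2 * l + 2 * d * (m-1) + m - 2 * m * (i-1)) = EM m l d (\<lambda>n. if n = i then 1 else 0) h"
    unfolding EM_def using i by (simp add: mult.assoc sum_delta_mult)
  then show ?thesis unfolding inspan_def by blast
qed

lemma EM_2: "i \<in> {2..l-d} \<Longrightarrow> inspan (EM m l d) (\<lambda>h. h ^ (l-i) * uh m h ^ (3 * m + 2 + 2 * (i-2)))"
proof -
  assume i: "i \<in> {2..l-d}"
  have "\<forall>h>0. h ^ (l-i) * uh m h ^ (3 * m + 2 + 2 * (i-2)) = EM m l d (\<lambda>n. if n = i + d then 1 else 0) h"
    unfolding EM_def using i by (simp add: mult.assoc sum_delta_mult)
  then show ?thesis unfolding inspan_def by blast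
qed



lemma cfgH: "m = 2*k+1 \<Longrightarrow> h > 0 \<Longrightarrow> cfg_h m k h" by unfold_locales

lemma U_props: "m = 2*k+1 \<Longrightarrow> h > 0 \<Longrightarrow> uh m h > 0 \<and> (uh m h)^2 + (uh m h)^(2*m) = h"
  by (rule uh_props) auto

lemma J_even_top: "m = 2*k+1 \<Longrightarrow> h > 0 \<Longrightarrow> Jint m i (2*b) h = Qe i b h (uh m h) - Qe i b h (- uh m h)"
  using cfg_h.J_even[OF cfgH] cfg_h.u_def[OF cfgH] by metis

lemma J_oddodd_top: "m = 2*k+1 \<Longrightarrow> h > 0 \<Longrightarrow> Jint m (2*a+1) (2*b+1) h = - (Qe (2*b+2) a h (uh m h ^ m) - Qe (2*b+2) a h (- (uh m h ^ m)))"
  using cfg_h.J_oddodd[OF cfgH] cfg_h.u_def[OF cfgH] by metis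

lemma J_even_ev: "m = 2*k+1 \<Longrightarrow> h > 0 \<Longrightarrow> Jint m (2*a) (2*b) h = 2 * Qe (2*a) b h (uh m h)"
  using J_even_top[of m k h "2*a" b] Qe_neg[of "2*a" b h "uh m h"] by simp

lemma J_even_odd: "m = 2*k+1 \<Longrightarrow> h > 0 \<Longrightarrow> odd i \<Longrightarrow> Jint m i (2*b) h = 0"
  using J_even_top[of m k h i b] Qe_neg[of i b h "uh m h"] by simp

lemma J_oo: "m = 2*k+1 \<Longrightarrow> h > 0 \<Longrightarrow> Jint m (2*a+1) (2*b+1) h = - 2 * Qe (2*b+2) a h (uh m h ^ m)"
  using J_oddodd_top[of m k h a b] Qe_neg[of "2*b+2" a h "uh m h ^ m"] by simp

lemma J00: "m = 2*k+1 \<Longrightarrow> h > 0 \<Longrightarrow> Jint m 0 0 h = 2 * uh m h"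
  using J_even_ev[of m k h 0 0] by (simp add: Qe_def)

lemma J11: "m = 2*k+1 \<Longrightarrow> h > 0 \<Longrightarrow> Jint m 1 1 h = - 2 * (uh m h ^ (3*m)) / 3"
proof -
  assume a: "m = 2*k+1" "h > 0"
  have q: "Qe 2 0 h y = y^3/3" for y by (simp add: Qe_def)
  have p: "uh m h ^ (3*m) = (uh m h ^ m)^3" by (metis power_mult mult.commute)
  show ?thesis using J_oo[OF a, of 0 0] q[of "uh m h ^ m"] p by (simp add: numeral_2_eq_2)
qed



lemma ex1: "q \<le> d \<Longrightarrow> d \<le> l \<Longrightarrow> m \<ge> 1 \<Longrightarrow> 2*l + 2*d*(m-1) + 1 - 2*m*(d-q) = 2*l+1-2*d+2*m*(q::nat)"
proof -
  assume a: "q \<le> d" "d \<le> l" "m \<ge> 1"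
  obtain e where e1: "d = q + e" using a(1) le_Suc_ex by blast
  obtain f where e2: "l = d + f" using a(2) le_Suc_ex by blast
  obtain m' where e3: "m = Suc m'" using a(3) by (cases m) auto
  have "2*l + 2*d*(m-1) + 1 = (2*f+1+2*m*q) + 2*m*(d-q)" unfolding e2 e1 e3 by (simp add: algebra_simps)
  moreover have "2*l+1-2*d+2*m*q = 2*f+1+2*m*q" unfolding e2 e1 by simp
  ultimately show ?thesis by simp
qed

context
  fixes m k l d :: nat
  assumes hm: "m = 2*k+1" and dl: "d \<le> l"
begin

lemma S_a: "d \<le> j \<Longrightarrow> j \<le> l \<Longrightarrow> inspan (ES m l d) (\<lambda>h. h^j * uh m h ^ (2*l+1-2*j))"
proof (induction "l - j" arbitrary: j)
  case 0
  then have jl: "j = l" by simp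
  have "inspan (ES m l d) (\<lambda>h. (1/2) * (h^l * Jint m 0 0 h))"
    by (rule inspan_scale[OF linE_ES ES_0])
  then show ?case
    by (rule inspan_cong[rotated]) (simp add: J00[OF hm] jl)
next
  case (Suc n)
  then have jl: "j < l" by simp
  have f1: "inspan (ES m l d) (\<lambda>h. h^(j+1) * uh m h ^ (2*l+1-2*(j+1)))"
    using Suc by (intro Suc.hyps) auto
  have f2: "inspan (ES m l d) (\<lambda>h. h^(l-(l-j)) * uh m h ^ (2*m+1+2*((l-j)-1)))"
    using Suc jl by (intro ES_2) auto
  have "inspan (ES m l d) (\<lambda>h. (-1) * (h^(l-(l-j)) * uh m h ^ (2*m+1+2*((l-j)-1))) + h^(j+1) * uh m h ^ (2*l+1-2*(j+1)))"
    by (rule inspan_lin[OF linE_ES f2 f1])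
  then show ?case
  proof (rule inspan_cong[rotated])
    fix h :: real assume h: "h > 0"
    define U where "U = uh m h"
    have hU: "U^2 + U^(2*m) = h" using U_props[OF hm h] unfolding U_def by simp
    define e where "e = 2*l+1-2*(j+1)"
    have e1: "2*l+1-2*j = e + 2" and e2: "2*m+1+2*((l-j)-1) = e + 2*m" and e3: "l-(l-j) = j"
      using jl unfolding e_def by auto
    have "U^(e+2) + U^(e+2*m) = U^e * (U^2 + U^(2*m))" by (simp add: power_add power2_eq_square algebra_simps)
    then have "U^(e+2) + U^(e+2*m) = U^e * h" unfolding hU .
    then have X: "U^(e+2) = U^e * h - U^(e+2*m)" by linarith
    have "h^j * U^(e+2) = - (h^j * U^(e+2*m)) + h^(j+1) * U^e"
      unfolding X by (simp add: algebra_simps)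
    then show "h^j * uh m h ^ (2*l+1-2*j) = (-1) * (h^(l-(l-j)) * uh m h ^ (2*m+1+2*((l-j)-1))) + h^(j+1) * uh m h ^ (2*l+1-2*(j+1))"
      unfolding e1 e2 e3 e_def[symmetric] U_def[symmetric] by simp
  qed
qed

lemma S_b: "j \<le> l \<Longrightarrow> inspan (ES m l d) (\<lambda>h. h^j * uh m h ^ (2*l+1-2*j))"
proof (cases "d \<le> j")
  case True
  assume "j \<le> l" then show ?thesis using S_a True by blast
next
  case False
  then have jd: "j < d" by simp
  have each: "inspan (ES m l d) (\<lambda>h. h^(d-q) * uh m h ^ (2*l+1-2*d+2*m*q))" if q: "q \<in> {..d-j}" for q
  proof (cases "q = 0")
    case True
    show ?thesis using S_a[of d] dl unfolding True by simp
  next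
    case False
    have i: "d-q+1 \<in> {1..d}" using q False jd by auto
    have ex: "2*l + 2*d*(m-1) + 1 - 2*m*(d-q+1-1) = 2*l+1-2*d+2*m*q"
      using ex1[of q d l m] q jd dl hm by simp
    show ?thesis using ES_1[OF i, of m l] unfolding ex by simp
  qed
  have "inspan (ES m l d) (\<lambda>h. \<Sum>q\<in>{..d-j}. (real (d-j choose q) * (-1)^q) * (h^(d-q) * uh m h ^ (2*l+1-2*d+2*m*q)))"
    by (rule inspan_sum[OF linE_ES]) (use each in auto)
  then show ?thesis
  proof (rule inspan_cong[rotated])
    fix h :: real assume h: "h > 0"
    define U where "U = uh m h"
    have hU: "U^2 = - (U^(2*m)) + h" using U_props[OF hm h] unfolding U_def by simp
    define E where "E = 2*l+1-2*d"
    have e1: "2*l+1-2*j = E + 2*(d-j)" using jd dl unfolding E_def by simp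
    have "h^j * U^(2*l+1-2*j) = h^j * U^E * (U^2)^(d-j)" unfolding e1 by (simp add: power_add power_mult)
    also have "\<dots> = h^j * U^E * (\<Sum>q\<le>d-j. real (d-j choose q) * (- (U^(2*m)))^q * h^(d-j-q))"
      by (subst hU) (rule arg_cong[OF binomial_ring])
    also have "\<dots> = (\<Sum>q\<le>d-j. (real (d-j choose q) * (-1)^q) * (h^(d-q) * U^(E+2*m*q)))"
      unfolding sum_distrib_left
    proof (rule sum.cong)
      fix q assume q: "q \<in> {..d-j}"
      have hh: "h^j * h^(d-j-q) = h^(d-q)" using q jd by (simp add: power_add[symmetric])
      have uu: "U^E * (U^(2*m))^q = U^(E+2*m*q)" by (simp add: power_add power_mult)
      show "h^j * U^E * (real (d-j choose q) * (- (U^(2*m)))^q * h^(d-j-q)) = (real (d-j choose q) * (-1)^q) * (h^(d-q) * U^(E+2*m*q))"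
      proof -
        have "h^j * U^E * (real (d-j choose q) * (- (U^(2*m)))^q * h^(d-j-q)) = (real (d-j choose q) * (-1)^q) * ((h^j * h^(d-j-q)) * (U^E * (U^(2*m))^q))"
          unfolding power_minus[of "U^(2*m)"] by (simp only: mult_ac)
        then show ?thesis unfolding hh uu .
      qed
    qed simp
    finally show "h^j * uh m h ^ (2*l+1-2*j) = (\<Sum>q\<in>{..d-j}. (real (d-j choose q) * (-1)^q) * (h^(d-q) * uh m h ^ (2*l+1-2*d+2*m*q)))"
      unfolding U_def E_def by simp
  qed
qed

lemma S_J: "inspan (ES m l d) (\<lambda>h. Jint m (2*l-2*d) (2*d) h)"
proof -
  have each: "inspan (ES m l d) (\<lambda>h. h^(d-p) * uh m h ^ (2*l+1-2*(d-p)))" if "p \<in> {..d}" for p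
    using S_b[of "d-p"] dl by simp
  have "inspan (ES m l d) (\<lambda>h. \<Sum>p\<in>{..d}. (2 * real (d choose p) * (-1)^p / real (2*(l-d)+2*p+1)) * (h^(d-p) * uh m h ^ (2*l+1-2*(d-p))))"
    by (rule inspan_sum[OF linE_ES]) (use each in auto)
  then show ?thesis
  proof (rule inspan_cong[rotated])
    fix h :: real assume h: "h > 0"
    have "Jint m (2*l-2*d) (2*d) h = Jint m (2*(l-d)) (2*d) h" by (simp add: diff_mult_distrib2)
    also have "\<dots> = 2 * Qe (2*(l-d)) d h (uh m h)" by (rule J_even_ev[OF hm h])
    also have "\<dots> = (\<Sum>p\<in>{..d}. (2 * real (d choose p) * (-1)^p / real (2*(l-d)+2*p+1)) * (h^(d-p) * uh m h ^ (2*l+1-2*(d-p))))"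
      unfolding Qe_def sum_distrib_left
    proof (rule sum.cong)
      fix p assume p: "p \<in> {..d}"
      have "2*(l-d)+2*p+1 = 2*l+1-2*(d-p)" using p dl by auto
      then show "2 * (real (d choose p) * (-1)^p * h^(d-p) * (uh m h ^ (2*(l-d)+2*p+1) / real (2*(l-d)+2*p+1))) =
        (2 * real (d choose p) * (-1)^p / real (2*(l-d)+2*p+1)) * (h^(d-p) * uh m h ^ (2*l+1-2*(d-p)))"
        by simp
    qed simp
    finally show "Jint m (2*l-2*d) (2*d) h = (\<Sum>p\<in>{..d}. (2 * real (d choose p) * (-1)^p / real (2*(l-d)+2*p+1)) * (h^(d-p) * uh m h ^ (2*l+1-2*(d-p))))" .
  qed
qed

end



lemma ex2: "q < d \<Longrightarrow> d \<le> l \<Longrightarrow> m \<ge> 1 \<Longrightarrow> 2*l + 2*d*(m-1) + m - 2*m*(d-q-1) = 3*m+2*l-2*d+2*m*(q::nat)"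
proof -
  assume a: "q < d" "d \<le> l" "m \<ge> 1"
  obtain e where e1: "d = q + e + 1" using a(1) by (metis add.commute add_Suc less_imp_Suc_add Suc_eq_plus1)
  obtain f where e2: "l = d + f" using a(2) le_Suc_ex by blast
  obtain m' where e3: "m = Suc m'" using a(3) by (cases m) auto
  have "2*l + 2*d*(m-1) + m = (3*m+2*f+2*m*q) + 2*m*(d-q-1)" unfolding e2 e1 e3 by (simp add: algebra_simps)
  moreover have "3*m+2*l-2*d+2*m*q = 3*m+2*f+2*m*q" unfolding e2 e1 by simp
  ultimately show ?thesis by simp
qed

context
  fixes m k l d :: nat
  assumes hm: "m = 2*k+1" and dl: "d < l"
begin

lemma M_a: "d \<le> j \<Longrightarrow> j \<le> l-1 \<Longrightarrow> inspan (EM m l d) (\<lambda>h. h^j * uh m h ^ (3*m+2*l-2-2*j))"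
proof -
  assume j: "d \<le> j" "j \<le> l-1"
  show ?thesis
  proof (cases "j = l-1")
    case True
    have "inspan (EM m l d) (\<lambda>h. (-3/2) * (h^(l-1) * Jint m 1 1 h))"
      by (rule inspan_scale[OF linE_EM EM_0])
    then show ?thesis
    proof (rule inspan_cong[rotated])
      fix h :: real assume h: "h > 0"
      have "3*m+2*l-2-2*j = 3*m" using True dl by simp
      then show "h^j * uh m h ^ (3*m+2*l-2-2*j) = (-3/2) * (h^(l-1) * Jint m 1 1 h)"
        using J11[OF hm h] True by simp
    qed
  next
    case False
    have i: "l-j \<in> {2..l-d}" using False j dl by auto
    have "3*m+2+2*(l-j-2) = 3*m+2*l-2-2*j" "l-(l-j) = j" using False j dl by auto
    then show ?thesis using EM_2[OF i, of m] by simp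
  qed
qed

lemma M_b: "j \<le> l-1 \<Longrightarrow> inspan (EM m l d) (\<lambda>h. h^j * uh m h ^ (3*m+2*l-2-2*j))"
proof (cases "d \<le> j")
  case True
  assume "j \<le> l-1" then show ?thesis using M_a True by blast
next
  case False
  then have jd: "j < d" by simp
  have each: "inspan (EM m l d) (\<lambda>h. h^(d-1-q) * uh m h ^ (3*m+2*l-2*d+2*m*q))" if q: "q \<in> {..d-1-j}" for q
  proof -
    have i: "d-q \<in> {1..d}" using q jd by auto
    have ex: "2*l + 2*d*(m-1) + m - 2*m*(d-q-1) = 3*m+2*l-2*d+2*m*q"
      using ex2[of q d l m] q jd dl hm by simp
    have "d-q-1 = d-1-q" by simp
    then show ?thesis using EM_1[OF i, of m l] unfolding ex by simp
  qed
  have "inspan (EM m l d) (\<lambda>h. \<Sum>q\<in>{..d-1-j}. (real (d-1-j choose q) * (-1)^q) * (h^(d-1-q) * uh m h ^ (3*m+2*l-2*d+2*m*q)))"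
    by (rule inspan_sum[OF linE_EM]) (use each in auto)
  then show ?thesis
  proof (rule inspan_cong[rotated])
    fix h :: real assume h: "h > 0"
    define U where "U = uh m h"
    have hU: "U^2 = - (U^(2*m)) + h" using U_props[OF hm h] unfolding U_def by simp
    define E where "E = 3*m+2*l-2*d"
    have e1: "3*m+2*l-2-2*j = E + 2*(d-1-j)" using jd dl unfolding E_def by simp
    have "h^j * U^(3*m+2*l-2-2*j) = h^j * U^E * (U^2)^(d-1-j)" unfolding e1 by (simp add: power_add power_mult)
    also have "\<dots> = h^j * U^E * (\<Sum>q\<le>d-1-j. real (d-1-j choose q) * (- (U^(2*m)))^q * h^(d-1-j-q))"
      by (subst hU) (rule arg_cong[OF binomial_ring])
    also have "\<dots> = (\<Sum>q\<le>d-1-j. (real (d-1-j choose q) * (-1)^q) * (h^(d-1-q) * U^(E+2*m*q)))"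
      unfolding sum_distrib_left
    proof (rule sum.cong)
      fix q assume q: "q \<in> {..d-1-j}"
      have hh: "h^j * h^(d-1-j-q) = h^(d-1-q)" using q jd by (simp add: power_add[symmetric])
      have uu: "U^E * (U^(2*m))^q = U^(E+2*m*q)" by (simp add: power_add power_mult)
      show "h^j * U^E * (real (d-1-j choose q) * (- (U^(2*m)))^q * h^(d-1-j-q)) = (real (d-1-j choose q) * (-1)^q) * (h^(d-1-q) * U^(E+2*m*q))"
      proof -
        have "h^j * U^E * (real (d-1-j choose q) * (- (U^(2*m)))^q * h^(d-1-j-q)) = (real (d-1-j choose q) * (-1)^q) * ((h^j * h^(d-1-j-q)) * (U^E * (U^(2*m))^q))"
          unfolding power_minus[of "U^(2*m)"] by (simp only: mult_ac)
        then show ?thesis unfolding hh uu .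
      qed
    qed simp
    finally show "h^j * uh m h ^ (3*m+2*l-2-2*j) = (\<Sum>q\<in>{..d-1-j}. (real (d-1-j choose q) * (-1)^q) * (h^(d-1-q) * uh m h ^ (3*m+2*l-2*d+2*m*q)))"
      unfolding U_def E_def by simp
  qed
qed

lemma M_T: "p \<le> l-d-1 \<Longrightarrow> inspan (EM m l d) (\<lambda>h. h^(l-d-1-p) * (uh m h ^ m)^(2*d+2+2*p+1))"
proof -
  assume p: "p \<le> l-d-1"
  define P where "P = d + p"
  have P: "P \<le> l - 1" using p dl unfolding P_def by simp
  have each: "inspan (EM m l d) (\<lambda>h. h^(l-1-q) * uh m h ^ (3*m+2*l-2-2*(l-1-q)))" if "q \<in> {..P}" for q
    by (rule M_b) simp
  have "inspan (EM m l d) (\<lambda>h. \<Sum>q\<in>{..P}. (real (P choose q) * (-1)^q) * (h^(l-1-q) * uh m h ^ (3*m+2*l-2-2*(l-1-q))))"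
    by (rule inspan_sum[OF linE_EM]) (use each in auto)
  then show ?thesis
  proof (rule inspan_cong[rotated])
    fix h :: real assume h: "h > 0"
    define U where "U = uh m h"
    have hU: "U^(2*m) = - (U^2) + h" using U_props[OF hm h] unfolding U_def by simp
    have "(U^m)^(2*d+2+2*p+1) = U^(3*m) * (U^(2*m))^P"
      unfolding P_def by (simp add: power_mult[symmetric] power_add[symmetric] algebra_simps)
    then have "h^(l-d-1-p) * (U^m)^(2*d+2+2*p+1) = h^(l-d-1-p) * U^(3*m) * (U^(2*m))^P" by simp
    also have "\<dots> = h^(l-d-1-p) * U^(3*m) * (\<Sum>q\<le>P. real (P choose q) * (- (U^2))^q * h^(P-q))"
      by (subst hU) (rule arg_cong[OF binomial_ring])
    also have "\<dots> = (\<Sum>q\<le>P. (real (P choose q) * (-1)^q) * (h^(l-1-q) * U^(3*m+2*l-2-2*(l-1-q))))"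
      unfolding sum_distrib_left
    proof (rule sum.cong)
      fix q assume q: "q \<in> {..P}"
      have hh: "h^(l-d-1-p) * h^(P-q) = h^(l-1-q)" using q P p dl unfolding P_def by (simp add: power_add[symmetric])
      have lq: "l - 1 - q + q + 1 = l" using q P dl by simp
      have e: "3*m+2*l-2-2*(l-1-q) = 3*m + 2*q"
      proof -
        have "3*m+2*l-2-2*(l-1-q) = 3*m+2*(l - 1 - q + q + 1)-2-2*(l-1-q)" unfolding lq ..
        also have "\<dots> = 3*m + 2*q" by simp
        finally show ?thesis .
      qed
      have uu: "U^(3*m) * (U^2)^q = U^(3*m+2*l-2-2*(l-1-q))" unfolding e by (simp add: power_add power_mult)
      show "h^(l-d-1-p) * U^(3*m) * (real (P choose q) * (- (U^2))^q * h^(P-q)) = (real (P choose q) * (-1)^q) * (h^(l-1-q) * U^(3*m+2*l-2-2*(l-1-q)))"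
      proof -
        have "h^(l-d-1-p) * U^(3*m) * (real (P choose q) * (- (U^2))^q * h^(P-q)) = (real (P choose q) * (-1)^q) * ((h^(l-d-1-p) * h^(P-q)) * (U^(3*m) * (U^2)^q))"
          unfolding power_minus[of "U^2"] by (simp only: mult_ac)
        then show ?thesis unfolding hh uu .
      qed
    qed simp
    finally show "h^(l-d-1-p) * (uh m h ^ m)^(2*d+2+2*p+1) = (\<Sum>q\<in>{..P}. (real (P choose q) * (-1)^q) * (h^(l-1-q) * uh m h ^ (3*m+2*l-2-2*(l-1-q))))"
      unfolding U_def by simp
  qed
qed

lemma M_J: "inspan (EM m l d) (\<lambda>h. Jint m (2*l-2*d-1) (2*d+1) h)"
proof -
  have each: "inspan (EM m l d) (\<lambda>h. h^(l-d-1-p) * (uh m h ^ m)^(2*d+2+2*p+1))" if "p \<in> {..l-d-1}" for p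
    using M_T that by simp
  have "inspan (EM m l d) (\<lambda>h. \<Sum>p\<in>{..l-d-1}. (-2 * real (l-d-1 choose p) * (-1)^p / real (2*d+2+2*p+1)) * (h^(l-d-1-p) * (uh m h ^ m)^(2*d+2+2*p+1)))"
    by (rule inspan_sum[OF linE_EM]) (use each in auto)
  then show ?thesis
  proof (rule inspan_cong[rotated])
    fix h :: real assume h: "h > 0"
    have "2*l-2*d-1 = 2*(l-d-1)+1" using dl by simp
    then have "Jint m (2*l-2*d-1) (2*d+1) h = Jint m (2*(l-d-1)+1) (2*d+1) h" by simp
    also have "\<dots> = - 2 * Qe (2*d+2) (l-d-1) h (uh m h ^ m)" by (rule J_oo[OF hm h])
    also have "\<dots> = (\<Sum>p\<in>{..l-d-1}. (-2 * real (l-d-1 choose p) * (-1)^p / real (2*d+2+2*p+1)) * (h^(l-d-1-p) * (uh m h ^ m)^(2*d+2+2*p+1)))"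
      unfolding Qe_def sum_distrib_left
      by (rule sum.cong) simp_all
    finally show "Jint m (2*l-2*d-1) (2*d+1) h = (\<Sum>p\<in>{..l-d-1}. (-2 * real (l-d-1 choose p) * (-1)^p / real (2*d+2+2*p+1)) * (h^(l-d-1-p) * (uh m h ^ m)^(2*d+2+2*p+1)))" .
  qed
qed

end



lemma JI_top: "m = 2*k+1 \<Longrightarrow> h > 0 \<Longrightarrow> Jint m i j h = (-1)^(i+j+1) * Iint m i j h"
  using cfg_h.JI[OF cfgH] by metis

lemma J01_top: "m = 2*k+1 \<Longrightarrow> h > 0 \<Longrightarrow> Jint m 0 1 h = h * pi / 2"
  using cfg_h.J01[OF cfgH] by metis

lemma J_evenodd_top:
  assumes hm: "m = 2*k+1" and h: "h > 0"
    and dG: "\<forall>x\<in>{-10<..<10}. (G has_real_derivative fab a b x) (at x)"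
    and c: "\<forall>t\<in>{0..pi/2}. G (t + pi) - G t = c"
  shows "Jint m (2*a) (2*b+1) h = h^(a+b+1) * c"
proof -
  have "Jint m (2*a) (2*b+1) h = sqrt h ^ (2*a+2*b+2) * (G (thetaB m h + pi) - G (thetaB m h))"
    using cfg_h.J_evenodd[OF cfgH[OF hm h] dG] cfg_h.r_def[OF cfgH[OF hm h]] cfg_h.th_def[OF cfgH[OF hm h]]
    by metis
  moreover have "thetaB m h \<in> {0..pi/2}"
    using cfg_h.th_range[OF cfgH[OF hm h]] cfg_h.th_def[OF cfgH[OF hm h]] by auto
  moreover have "sqrt h ^ (2*a+2*b+2) = h^(a+b+1)"
  proof -
    have e: "2*a+2*b+2 = 2*(a+b+1)" by simp
    have "sqrt h ^ (2*a+2*b+2) = (sqrt h ^ 2) ^ (a+b+1)" unfolding e by (rule power_mult)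
    then show ?thesis using h by simp
  qed
  ultimately show ?thesis using c by simp
qed

theorem lemma3p3:
  fixes k m :: nat
  assumes hm: "m = 2 * k + 1"
  shows
   "(\<forall>i l s. \<forall>h>0.
        Jint m i (2 * s) h = - Iint m i (2 * s) h
      \<and> Jint m (2 * l) (2 * s+1) h = Iint m (2 * l) (2 * s+1) h
      \<and> Jint m (2 * l+1) (2 * s+1) h = - Iint m (2 * l+1) (2 * s+1) h)
  \<and> (\<forall>l\<ge>1. \<forall>d\<le>l. \<exists>\<tau>:: nat \<Rightarrow> real. \<forall>h>0.
        Jint m (2 * l-2 * d) (2 * d) h =
          \<tau> 0 * h ^ l * Jint m 0 0 h
          + (\<Sum>i=1..d. \<tau> i * h ^ (i-1) * uh m h ^ (2 * l + 2 * d * (m-1) + 1 - 2 * m * (i-1)))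
          + (\<Sum>i=1..l-d. \<tau> (i+d) * h ^ (l-i) * uh m h ^ (2 * m + 1 + 2 * (i-1))))
  \<and> (\<forall>l\<ge>1. \<forall>d\<le>l-1. \<exists>\<mu> :: nat \<Rightarrow> real. \<forall>h>0.
        Jint m (2 * l-2 * d-1) (2 * d+1) h =
          \<mu> 0 * h ^ (l-1) * Jint m 1 1 h
          + (\<Sum>i=1..d. \<mu> i * h ^ (i-1) * uh m h ^ (2 * l + 2 * d * (m-1) + m - 2 * m * (i-1)))
          + (\<Sum>i=2..l-d. \<mu> (i+d) * h ^ (l-i) * uh m h ^ (3 * m + 2 + 2 * (i-2))))
  \<and> (\<forall>l. \<forall>d\<le>l.
        (\<forall>h>0. Jint m (2 * l+1-2 * d) (2 * d) h = 0)
      \<and> (\<exists>chi :: real. \<forall>h>0. Jint m (2 * l-2 * d) (2 * d+1) h = chi * h ^ l * Jint m 0 1 h))"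
proof (intro conjI allI impI)
  fix i s :: nat and h :: real assume h: "h > 0"
  show "Jint m i (2 * s) h = - Iint m i (2 * s) h"
  proof (cases "even i")
    case True
    then show ?thesis using JI_top[OF hm h] by simp
  next
    case False
    have "Jint m i (2 * s) h = 0" using J_even_odd[OF hm h] False by simp
    moreover have "Jint m i (2 * s) h = Iint m i (2 * s) h" using JI_top[OF hm h] False by simp
    ultimately show ?thesis by simp
  qed
next
  fix l s :: nat and h :: real assume h: "h > 0"
  show "Jint m (2 * l) (2 * s+1) h = Iint m (2 * l) (2 * s+1) h"
    using JI_top[OF hm h] by simp
  show "Jint m (2 * l+1) (2 * s+1) h = - Iint m (2 * l+1) (2 * s+1) h"
    using JI_top[OF hm h] by simp
next
  fix l d :: nat assume "1 \<le> l" "d \<le> l"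
  then have "inspan (ES m l d) (\<lambda>h. Jint m (2*l-2*d) (2*d) h)" using S_J[OF hm] by blast
  then show "\<exists>\<tau>:: nat \<Rightarrow> real. \<forall>h>0.
        Jint m (2 * l-2 * d) (2 * d) h =
          \<tau> 0 * h ^ l * Jint m 0 0 h
          + (\<Sum>i=1..d. \<tau> i * h ^ (i-1) * uh m h ^ (2 * l + 2 * d * (m-1) + 1 - 2 * m * (i-1)))
          + (\<Sum>i=1..l-d. \<tau> (i+d) * h ^ (l-i) * uh m h ^ (2 * m + 1 + 2 * (i-1)))"
    unfolding inspan_def ES_def .
next
  fix l d :: nat assume "1 \<le> l" "d \<le> l - 1"
  then have "d < l" by simp
  then have "inspan (EM m l d) (\<lambda>h. Jint m (2*l-2*d-1) (2*d+1) h)" using M_J[OF hm] by blast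
  then show "\<exists>\<mu> :: nat \<Rightarrow> real. \<forall>h>0.
        Jint m (2 * l-2 * d-1) (2 * d+1) h =
          \<mu> 0 * h ^ (l-1) * Jint m 1 1 h
          + (\<Sum>i=1..d. \<mu> i * h ^ (i-1) * uh m h ^ (2 * l + 2 * d * (m-1) + m - 2 * m * (i-1)))
          + (\<Sum>i=2..l-d. \<mu> (i+d) * h ^ (l-i) * uh m h ^ (3 * m + 2 + 2 * (i-2)))"
    unfolding inspan_def EM_def .
next
  fix l d :: nat and h :: real assume d: "d \<le> l" and h: "h > 0"
  have "odd (2 * l+1-2 * d)" using d by presburger
  then show "Jint m (2 * l+1-2 * d) (2 * d) h = 0" using J_even_odd[OF hm h] by blast
next
  fix l d :: nat assume d: "d \<le> l"
  obtain G c where G: "\<forall>x\<in>{-10<..<10}. (G has_real_derivative fab (l-d) d x) (at x)"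
    and c: "\<forall>t\<in>{0..pi/2}. G (t + pi) - G t = c"
    using period_const by blast
  show "\<exists>chi :: real. \<forall>h>0. Jint m (2 * l-2 * d) (2 * d+1) h = chi * h ^ l * Jint m 0 1 h"
  proof (intro exI allI impI)
    fix h :: real assume h: "h > 0"
    have "Jint m (2 * l-2 * d) (2 * d+1) h = Jint m (2 * (l-d)) (2 * d+1) h" by (simp add: diff_mult_distrib2)
    also have "\<dots> = h^(l-d+d+1) * c" by (rule J_evenodd_top[OF hm h G c])
    also have "\<dots> = (2 * c / pi) * h ^ l * (h * pi / 2)" using d by simp
    also have "\<dots> = (2 * c / pi) * h ^ l * Jint m 0 1 h" by (simp only: J01_top[OF hm h])
    finally show "Jint m (2 * l-2 * d) (2 * d+1) h = (2 * c / pi) * h ^ l * Jint m 0 1 h" .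
  qed
qed

end
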